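(* Let $\mathrm{Cl}_{p,q}$ be a non-degenerate real Clifford algebra with generators $e_1,\dots,e_n$, $n=p+q$, with extended basis $\mathbf{B}$, multiplication table $\mathbf{M}$, diagonal scalar-product matrix $\mathbf{G}$, coefficient maps $C_S$ and canonical matrix map $\pi$ as defined below. Define $g$ as left multiplication by $\mathbf{G}$, $g(\mathbf{X})=\mathbf{G}\mathbf{X}$. Then for every fixed multi-index $S$ (i.e. $e_S\in\mathbf{B}$), \[ \pi(e_S)=C_S(g(\mathbf{M}))=g(C_S(\mathbf{M})), \] i.e. $\pi=C_S\circ g=g\circ C_S$ on $\mathbf{M}$. Furthermore, $\pi$ (extended linearly) is an isomorphism of $\mathrm{Cl}_{p,q}$ onto its image in $\mathbf{Mat}_{\mathbb{R}}(2^n\times 2^n)$, with inverse $\pi^{-1}$ on that image, thereby inducing a representation of $\mathrm{Cl}_{p,q}$ in the real matrix algebra $\mathbf{Mat}_{\mathbb{R}}(2^n\times 2^n)$.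
   Context: Generators satisfy $e_ie_j=-e_je_i$ ($i\ne j$) and $e_i^2=\sigma_i\in\{1,-1\}$. For $S=(s_1<\dots<s_m)\subseteq\{1,\dots,n\}$, $e_S=e_{s_1}\cdots e_{s_m}$, $e_\emptyset=1$. $\mathbf{B}$ is the list of all $2^n$ blades ordered by a fixed total order $\prec$ extending $e_i\prec e_j$ for $i<j$, with $1$ first. For blades, $e_Me_N=m_{MN}e_{M\triangle N}$ with $m_{MN}\in\{\pm1\}$; $\mathbf{M}=(e_Me_N)_{M,N}$ is the $2^n\times2^n$ multiplication table (entries in the algebra). $C_S$ acts entrywise on such arrays, sending $x\,e_U$ to $x$ if $U=S$ and to $0$ otherwise. $\mathbf{G}=\mathrm{diag}(\sigma_M)$ with $\sigma_M=\langle e_Me_M\rangle_0\in\{\pm1\}$. The canonical matrix map is $\pi(e_S)=\mathbf{E}_S:=\mathbf{G}\,C_S(\mathbf{M})$, extended linearly. *)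

theory Defs
  imports Complex_Main "Jordan_Normal_Form.Matrix"
begin

definition blade :: "(nat \<Rightarrow> 'a::monoid_mult) \<Rightarrow> nat set \<Rightarrow> 'a" where
  "blade e S = prod_list (map e (sorted_list_of_set S))"

definition clifford_pq :: "nat \<Rightarrow> nat \<Rightarrow> nat \<Rightarrow> (nat \<Rightarrow> real) \<Rightarrow> (nat \<Rightarrow> 'a::real_algebra_1) \<Rightarrow> bool" where
  "clifford_pq p q n \<sigma> e \<longleftrightarrow>
     n = p + q \<and>
     (\<forall>i\<in>{1..n}. \<sigma> i = 1 \<or> \<sigma> i = -1) \<and>
     card {i\<in>{1..n}. \<sigma> i = 1} = p \<and> card {i\<in>{1..n}. \<sigma> i = -1} = q \<and>
     (\<forall>i\<in>{1..n}. \<forall>j\<in>{1..n}. i \<noteq> j \<longrightarrow> e i * e j = - (e j * e i)) \<and>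
     (\<forall>i\<in>{1..n}. e i * e i = of_real (\<sigma> i)) \<and>
     inj_on (blade e) (Pow {1..n}) \<and>
     independent (blade e ` Pow {1..n}) \<and>
     span (blade e ` Pow {1..n}) = UNIV"

text \<open>The list B of blades: bl k is the multi-index of the k-th blade (k < 2^n) in a fixed
  total order extending e_i \<prec> e_j for i < j, with 1 first.\<close>
definition blade_order :: "nat \<Rightarrow> (nat \<Rightarrow> nat set) \<Rightarrow> bool" where
  "blade_order n bl \<longleftrightarrow>
     bij_betw bl {..<2^n} (Pow {1..n}) \<and> bl 0 = {} \<and>
     (\<forall>a<2^n. \<forall>b<2^n. \<forall>i j. bl a = {i} \<and> bl b = {j} \<and> i < j \<longrightarrow> a < b)"

definition coef :: "nat \<Rightarrow> (nat \<Rightarrow> 'a::real_algebra_1) \<Rightarrow> nat set \<Rightarrow> 'a \<Rightarrow> real" where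
  "coef n e S x = representation (blade e ` Pow {1..n}) x (blade e S)"

definition mult_table :: "nat \<Rightarrow> (nat \<Rightarrow> nat set) \<Rightarrow> (nat \<Rightarrow> 'a::real_algebra_1) \<Rightarrow> 'a mat" where
  "mult_table n bl e = mat (2^n) (2^n) (\<lambda>(i,j). blade e (bl i) * blade e (bl j))"

definition coef_mat :: "nat \<Rightarrow> (nat \<Rightarrow> 'a::real_algebra_1) \<Rightarrow> nat set \<Rightarrow> 'a mat \<Rightarrow> real mat" where
  "coef_mat n e S X = map_mat (coef n e S) X"

definition sigma_blade :: "nat \<Rightarrow> (nat \<Rightarrow> 'a::real_algebra_1) \<Rightarrow> nat set \<Rightarrow> real" where
  "sigma_blade n e M = coef n e {} (blade e M * blade e M)"

definition Gmat :: "nat \<Rightarrow> (nat \<Rightarrow> nat set) \<Rightarrow> (nat \<Rightarrow> 'a::real_algebra_1) \<Rightarrow> real mat" where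
  "Gmat n bl e = mat (2^n) (2^n) (\<lambda>(i,j). if i = j then sigma_blade n e (bl i) else 0)"

definition g_alg :: "nat \<Rightarrow> (nat \<Rightarrow> nat set) \<Rightarrow> (nat \<Rightarrow> 'a::real_algebra_1) \<Rightarrow> 'a mat \<Rightarrow> 'a mat" where
  "g_alg n bl e X = mat (dim_row X) (dim_col X)
     (\<lambda>(i,j). \<Sum>k<dim_row X. (Gmat n bl e $$ (i,k)) *\<^sub>R (X $$ (k,j)))"

definition Emat :: "nat \<Rightarrow> (nat \<Rightarrow> nat set) \<Rightarrow> (nat \<Rightarrow> 'a::real_algebra_1) \<Rightarrow> nat set \<Rightarrow> real mat" where
  "Emat n bl e S = Gmat n bl e * coef_mat n e S (mult_table n bl e)"

definition pimap :: "nat \<Rightarrow> (nat \<Rightarrow> nat set) \<Rightarrow> (nat \<Rightarrow> 'a::real_algebra_1) \<Rightarrow> 'a \<Rightarrow> real mat" where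
  "pimap n bl e x = mat (2^n) (2^n)
     (\<lambda>(i,j). \<Sum>S\<in>Pow {1..n}. coef n e S x * (Emat n bl e S $$ (i,j)))"

end

theory Submission
  imports Defs
begin

definition sd :: "nat set \<Rightarrow> nat set \<Rightarrow> nat set" where
  "sd A B = (A - B) \<union> (B - A)"

lemma sorted_split:
  fixes T :: "nat set"
  assumes "finite T"
  shows "sorted_list_of_set T = sorted_list_of_set {t\<in>T. t<x} @ (if x\<in>T then [x] else []) @ sorted_list_of_set {t\<in>T. x<t}"
proof -
  let ?l = "sorted_list_of_set {t\<in>T. t<x} @ (if x\<in>T then [x] else []) @ sorted_list_of_set {t\<in>T. x<t}"
  have f1: "finite {t\<in>T. t<x}" "finite {t\<in>T. x<t}" using assms by auto
  have s: "sorted_wrt (<) ?l"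
    unfolding sorted_wrt_append using f1 by (cases "x\<in>T") auto
  have st: "set ?l = T" using f1 by (cases "x\<in>T") (auto simp: linorder_neq_iff, metis linorder_neqE_nat)
  have d: "distinct ?l" using s strict_sorted_iff by blast
  have "length ?l = card T" by (metis distinct_card d st)
  then show ?thesis using sorted_list_of_set_unique[OF assms] s st by (metis)
qed

lemma sum_delta_mult:
  assumes "i < (N::nat)"
  shows "(\<Sum>k = 0..<N. (if i = k then a else 0) * (f k :: real)) = a * f i"
proof -
  have "(\<Sum>k=0..<N. (if i=k then a else 0) * f k) = (\<Sum>k=0..<N. if i = k then a * f k else 0)"
    by (rule sum.cong) auto
  also have "\<dots> = a * f i" using assms by (simp add: sum.delta')
  finally show ?thesis .
qed

lemma neg1_pow: "(-1::real)^k = 1 \<or> (-1::real)^k = -1"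
  by (cases "even k") auto

lemma sd_fold: "distinct xs \<Longrightarrow> foldr (\<lambda>x T. sd T {x}) xs N = sd N (set xs)"
  by (induction xs) (auto simp: sd_def)

context
  fixes n :: nat and \<sigma> :: "nat \<Rightarrow> real" and e :: "nat \<Rightarrow> 'a::real_algebra_1"
  assumes anti: "\<And>i j. i\<in>{1..n} \<Longrightarrow> j\<in>{1..n} \<Longrightarrow> i\<noteq>j \<Longrightarrow> e i * e j = - (e j * e i)"
  and sq: "\<And>i. i\<in>{1..n} \<Longrightarrow> e i * e i = of_real (\<sigma> i)"
  and sgn: "\<And>i. i\<in>{1..n} \<Longrightarrow> \<sigma> i = 1 \<or> \<sigma> i = -1"
begin

lemma comm_list:
  assumes "x\<in>{1..n}" "set L \<subseteq> {1..n}" "x \<notin> set L"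
  shows "e x * prod_list (map e L) = (-1)^length L *\<^sub>R (prod_list (map e L) * e x)"
  using assms
proof (induction L)
  case Nil then show ?case by simp
next
  case (Cons y L)
  let ?P = "prod_list (map e L)"
  have "e x * prod_list (map e (y#L)) = (e x * e y) * ?P" by (simp add: mult.assoc)
  also have "\<dots> = - (e y * (e x * ?P))" using anti[of x y] Cons.prems by (simp add: mult.assoc)
  also have "\<dots> = - (e y * ((-1)^length L *\<^sub>R (?P * e x)))" using Cons by simp
  also have "\<dots> = (-1)^length (y#L) *\<^sub>R (prod_list (map e (y#L)) * e x)" by (simp add: mult.assoc)
  finally show ?case .
qed

lemma gen_blade:
  assumes x: "x\<in>{1..n}" and T: "T \<subseteq> {1..n}"
  shows "\<exists>c. (c = 1 \<or> c = -1) \<and> e x * blade e T = c *\<^sub>R blade e (sd T {x})"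
proof -
  have fT: "finite T" using T finite_subset by blast
  define L1 where "L1 = sorted_list_of_set {t\<in>T. t<x}"
  define L2 where "L2 = sorted_list_of_set {t\<in>T. x<t}"
  have L1s: "set L1 \<subseteq> {1..n}" "x \<notin> set L1" unfolding L1_def using fT T by auto
  show ?thesis
  proof (cases "x \<in> T")
    case False
    have b1: "blade e T = prod_list (map e L1) * prod_list (map e L2)"
      unfolding blade_def sorted_split[OF fT, of x] L1_def L2_def using False by simp
    have e1: "{t\<in>insert x T. t<x} = {t\<in>T. t<x}" "{t\<in>insert x T. x<t} = {t\<in>T. x<t}" by auto
    have "sorted_list_of_set (insert x T) = sorted_list_of_set {t\<in>insert x T. t<x} @ (if x \<in> insert x T then [x] else []) @ sorted_list_of_set {t\<in>insert x T. x<t}"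
      by (rule sorted_split) (use fT in simp)
    then have "sorted_list_of_set (insert x T) = L1 @ [x] @ L2"
      by (simp only: e1 L1_def L2_def) (simp only: insertI1 if_True)
    moreover have "sd T {x} = insert x T" using False by (auto simp: sd_def)
    ultimately have b2: "blade e (sd T {x}) = prod_list (map e L1) * e x * prod_list (map e L2)"
      unfolding blade_def by (simp add: mult.assoc)
    have "e x * blade e T = (-1)^length L1 *\<^sub>R blade e (sd T {x})"
      unfolding b1 b2 using comm_list[OF x L1s] by (simp add: mult.assoc[symmetric])
    then show ?thesis using neg1_pow by blast
  next
    case True
    have b1: "blade e T = prod_list (map e L1) * (e x * prod_list (map e L2))"
      unfolding blade_def sorted_split[OF fT, of x] L1_def L2_def using True by simp
    have e1: "{t\<in>T - {x}. t<x} = {t\<in>T. t<x}" "{t\<in>T-{x}. x<t} = {t\<in>T. x<t}" by auto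
    have "sorted_list_of_set (T - {x}) = sorted_list_of_set {t\<in>T - {x}. t<x} @ (if x \<in> T - {x} then [x] else []) @ sorted_list_of_set {t\<in>T - {x}. x<t}"
      by (rule sorted_split) (use fT in simp)
    then have "sorted_list_of_set (T - {x}) = L1 @ L2"
      using e1 by (simp only: e1 L1_def L2_def) (simp only: if_False append_Nil Diff_iff singleton_iff simp_thms)
    moreover have "sd T {x} = T - {x}" using True by (auto simp: sd_def)
    ultimately have b2: "blade e (sd T {x}) = prod_list (map e L1) * prod_list (map e L2)"
      unfolding blade_def by simp
    have "e x * blade e T = ((-1)^length L1 *\<^sub>R (prod_list (map e L1) * e x)) * (e x * prod_list (map e L2))"
      unfolding b1 using comm_list[OF x L1s] by (simp add: mult.assoc[symmetric])
    also have "\<dots> = ((-1)^length L1 * \<sigma> x) *\<^sub>R blade e (sd T {x})"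
      unfolding b2 using sq[OF x]
      by (simp add: mult.assoc[symmetric]) (simp add: mult.assoc of_real_def)
    finally show ?thesis using neg1_pow[of "length L1"] sgn[OF x] by auto
  qed
qed


lemma sd_sub: "A \<subseteq> {1..n} \<Longrightarrow> B \<subseteq> {1..n} \<Longrightarrow> sd A B \<subseteq> {1..n}"
  by (auto simp: sd_def)

lemma list_blade:
  assumes "set xs \<subseteq> {1..n}" "N \<subseteq> {1..n}"
  shows "(\<exists>c. (c = 1 \<or> c = -1) \<and> prod_list (map e xs) * blade e N = c *\<^sub>R blade e (foldr (\<lambda>x T. sd T {x}) xs N))
     \<and> foldr (\<lambda>x T. sd T {x}) xs N \<subseteq> {1..n}"
  using assms
proof (induction xs)
  case Nil then show ?case by (auto intro!: exI[of _ 1])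
next
  case (Cons x xs)
  let ?T = "foldr (\<lambda>x T. sd T {x}) xs N"
  from Cons obtain c where c: "c = 1 \<or> c = -1" "prod_list (map e xs) * blade e N = c *\<^sub>R blade e ?T"
    and T: "?T \<subseteq> {1..n}" by auto
  have x: "x \<in> {1..n}" using Cons.prems by auto
  obtain c' where c': "c' = 1 \<or> c' = -1" "e x * blade e ?T = c' *\<^sub>R blade e (sd ?T {x})"
    using gen_blade[OF x T] by blast
  have "prod_list (map e (x#xs)) * blade e N = e x * (c *\<^sub>R blade e ?T)"
    using c by (simp add: mult.assoc)
  also have "\<dots> = (c * c') *\<^sub>R blade e (sd ?T {x})" using c' by simp
  finally show ?case using c c' sd_sub[OF T] x by auto
qed

lemma blade_mult:
  assumes "M \<subseteq> {1..n}" "N \<subseteq> {1..n}"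
  shows "\<exists>c. (c = 1 \<or> c = -1) \<and> blade e M * blade e N = c *\<^sub>R blade e (sd N M)"
proof -
  have fM: "finite M" using assms finite_subset by blast
  have "foldr (\<lambda>x T. sd T {x}) (sorted_list_of_set M) N = sd N M"
    using sd_fold[of "sorted_list_of_set M" N] fM by simp
  then show ?thesis using list_blade[of "sorted_list_of_set M" N] assms fM unfolding blade_def by auto
qed

end


context
  fixes p q n :: nat and \<sigma> :: "nat \<Rightarrow> real" and e :: "nat \<Rightarrow> 'a::real_algebra_1"
  assumes cl: "clifford_pq p q n \<sigma> e"
begin

lemma cl_anti: "\<And>i j. i\<in>{1..n} \<Longrightarrow> j\<in>{1..n} \<Longrightarrow> i\<noteq>j \<Longrightarrow> e i * e j = - (e j * e i)"
  and cl_sq: "\<And>i. i\<in>{1..n} \<Longrightarrow> e i * e i = of_real (\<sigma> i)"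
  and cl_sgn: "\<And>i. i\<in>{1..n} \<Longrightarrow> \<sigma> i = 1 \<or> \<sigma> i = -1"
  and cl_inj: "inj_on (blade e) (Pow {1..n})"
  and cl_ind: "independent (blade e ` Pow {1..n})"
  and cl_span: "span (blade e ` Pow {1..n}) = UNIV"
  using cl unfolding clifford_pq_def by (meson, meson, meson, meson, meson, meson)

lemma coef_add: "coef n e S (x + y) = coef n e S x + coef n e S y"
  unfolding coef_def using real_vector.representation_add[OF cl_ind] cl_span by simp

lemma coef_scale: "coef n e S (c *\<^sub>R x) = c * coef n e S x"
  unfolding coef_def using real_vector.representation_scale[OF cl_ind] cl_span by simp

lemma coef_sum: "coef n e S (\<Sum>i\<in>I. f i) = (\<Sum>i\<in>I. coef n e S (f i))"
  unfolding coef_def using real_vector.representation_sum[OF cl_ind, of I f] cl_span by simp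

lemma coef_blade: "S \<in> Pow {1..n} \<Longrightarrow> T \<in> Pow {1..n} \<Longrightarrow> coef n e S (blade e T) = (if S = T then 1 else 0)"
  unfolding coef_def using real_vector.representation_basis[OF cl_ind, of "blade e T"] cl_inj
  by (auto simp: inj_on_eq_iff)

lemma expand: "x = (\<Sum>S\<in>Pow {1..n}. coef n e S x *\<^sub>R blade e S)"
proof -
  have "(\<Sum>b\<in>blade e ` Pow {1..n}. representation (blade e ` Pow {1..n}) x b *\<^sub>R b) = x"
    by (rule real_vector.sum_representation_eq[OF cl_ind]) (use cl_span in auto)
  then show ?thesis unfolding coef_def sum.reindex[OF cl_inj] comp_def by simp
qed

lemma blade_nz: "S \<in> Pow {1..n} \<Longrightarrow> blade e S \<noteq> 0"
proof
  assume "S \<in> Pow {1..n}" "blade e S = 0"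
  then have "0 \<in> blade e ` Pow {1..n}" by (metis imageI)
  then show False using cl_ind real_vector.dependent_zero by metis
qed

lemma blade_empty: "blade e {} = 1" by (simp add: blade_def)

definition sg where "sg M N = coef n e (sd N M) (blade e M * blade e N)"

lemma sg_prop:
  assumes "M \<in> Pow {1..n}" "N \<in> Pow {1..n}"
  shows "(sg M N = 1 \<or> sg M N = -1) \<and> blade e M * blade e N = sg M N *\<^sub>R blade e (sd N M)"
proof -
  obtain c where c: "c = 1 \<or> c = -1" "blade e M * blade e N = c *\<^sub>R blade e (sd N M)"
    using blade_mult[where n=n and \<sigma>=\<sigma> and e=e and M=M and N=N, OF cl_anti cl_sq cl_sgn] assms by auto
  have sub: "sd N M \<in> Pow {1..n}" using assms by (auto simp: sd_def)
  have "sg M N = c" unfolding sg_def c(2) coef_scale coef_blade[OF sub sub] by simp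
  then show ?thesis using c by metis
qed

lemma key:
  assumes M: "M \<in> Pow {1..n}" and N: "N \<in> Pow {1..n}" and S: "S \<in> Pow {1..n}"
  shows "sigma_blade n e M * coef n e S (blade e M * blade e N) = coef n e N (blade e M * blade e S)"
proof -
  have e0: "{} \<in> Pow {1..n}" by simp
  have smm: "sd M M = {}" by (simp add: sd_def)
  have hN: "blade e M * blade e N = sg M N *\<^sub>R blade e (sd N M)" and sN: "sg M N = 1 \<or> sg M N = -1"
    using sg_prop[OF M N] by auto
  have hS: "blade e M * blade e S = sg M S *\<^sub>R blade e (sd S M)"
    using sg_prop[OF M S] by auto
  have hM: "blade e M * blade e M = sg M M *\<^sub>R 1"
    using sg_prop[OF M M] unfolding smm blade_empty by auto
  have sig: "sigma_blade n e M = sg M M"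
    unfolding sigma_blade_def hM blade_empty[symmetric] coef_scale coef_blade[OF e0 e0] by simp
  have T1: "sd N M \<in> Pow {1..n}" "sd S M \<in> Pow {1..n}" using M N S by (auto simp: sd_def)
  have iff: "S = sd N M \<longleftrightarrow> N = sd S M" by (auto simp: sd_def)
  have l: "coef n e S (blade e M * blade e N) = (if S = sd N M then sg M N else 0)"
    unfolding hN coef_scale coef_blade[OF S T1(1)] by simp
  have r: "coef n e N (blade e M * blade e S) = (if N = sd S M then sg M S else 0)"
    unfolding hS coef_scale coef_blade[OF N T1(2)] by simp
  show ?thesis
  proof (cases "S = sd N M")
    case False
    then have "N \<noteq> sd S M" using iff by blast
    then show ?thesis unfolding l r if_not_P[OF False] if_not_P[OF \<open>N \<noteq> sd S M\<close>] by simp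
  next
    case True
    then have NS: "N = sd S M" using iff by simp
    have "blade e M * (blade e M * blade e N) = sg M M *\<^sub>R blade e N"
      by (simp only: mult.assoc[symmetric] hM) simp
    moreover have "blade e M * (blade e M * blade e N) = (sg M N * sg M S) *\<^sub>R blade e N"
    proof -
      have "blade e M * (blade e M * blade e N) = sg M N *\<^sub>R (blade e M * blade e S)"
        unfolding hN True[symmetric] by simp
      also have "\<dots> = (sg M N * sg M S) *\<^sub>R blade e N" unfolding hS NS[symmetric] by simp
      finally show ?thesis .
    qed
    ultimately have "sg M M = sg M N * sg M S" using blade_nz[OF N] by (metis scaleR_cancel_right)
    then have "sg M M * sg M N = sg M S * (sg M N * sg M N)" by (simp add: mult_ac)
    moreover have "sg M N * sg M N = 1" using sN by (elim disjE) simp_all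
    ultimately have "sg M M * sg M N = sg M S" by (metis mult_1_right)
    then show ?thesis unfolding l r sig if_P[OF True] if_P[OF NS] .
  qed
qed

end


context
  fixes p q n :: nat and \<sigma> :: "nat \<Rightarrow> real" and e :: "nat \<Rightarrow> 'a::real_algebra_1"
    and bl :: "nat \<Rightarrow> nat set"
  assumes cl: "clifford_pq p q n \<sigma> e" and bo: "blade_order n bl"
begin

lemma bl_bij: "bij_betw bl {..<2^n} (Pow {1..n})" and bl0: "bl 0 = {}"
  using bo unfolding blade_order_def by (meson, meson)

lemma bl_in: "i < 2^n \<Longrightarrow> bl i \<in> Pow {1..n}"
  using bl_bij bij_betwE by blast

lemma bl_eq: "i < 2^n \<Longrightarrow> j < 2^n \<Longrightarrow> bl i = bl j \<longleftrightarrow> i = j"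
  using bl_bij unfolding bij_betw_def inj_on_def by blast

lemma expand_idx: "x = (\<Sum>k<2^n. coef n e (bl k) x *\<^sub>R blade e (bl k))"
proof -
  have "(\<Sum>k<2^n. coef n e (bl k) x *\<^sub>R blade e (bl k)) = (\<Sum>S\<in>Pow {1..n}. coef n e S x *\<^sub>R blade e S)"
    by (rule sum.reindex_bij_betw[OF bl_bij])
  then show ?thesis using expand[OF cl, of x] by simp
qed

lemma Emat_idx:
  assumes "i < 2^n" "j < 2^n"
  shows "Emat n bl e S $$ (i,j) = sigma_blade n e (bl i) * coef n e S (blade e (bl i) * blade e (bl j))"
  using assms by (simp add: Emat_def index_mult_mat Gmat_def coef_mat_def mult_table_def scalar_prod_def sum_delta_mult)


lemma pimap_idx:
  assumes i: "i < 2^n" and j: "j < 2^n"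
  shows "pimap n bl e x $$ (i,j) = coef n e (bl j) (blade e (bl i) * x)"
proof -
  have "pimap n bl e x $$ (i,j) = (\<Sum>S\<in>Pow {1..n}. coef n e S x * Emat n bl e S $$ (i,j))"
    using i j by (simp add: pimap_def)
  also have "\<dots> = (\<Sum>S\<in>Pow {1..n}. coef n e S x * coef n e (bl j) (blade e (bl i) * blade e S))"
  proof (rule sum.cong[OF refl])
    fix S assume S: "S \<in> Pow {1..n}"
    show "coef n e S x * Emat n bl e S $$ (i,j) = coef n e S x * coef n e (bl j) (blade e (bl i) * blade e S)"
      unfolding Emat_idx[OF i j] key[OF cl bl_in[OF i] bl_in[OF j] S] ..
  qed
  also have "\<dots> = coef n e (bl j) (\<Sum>S\<in>Pow {1..n}. coef n e S x *\<^sub>R (blade e (bl i) * blade e S))"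
    by (simp add: coef_sum[OF cl] coef_scale[OF cl])
  also have "(\<Sum>S\<in>Pow {1..n}. coef n e S x *\<^sub>R (blade e (bl i) * blade e S)) = blade e (bl i) * x"
  proof -
    have "blade e (bl i) * x = blade e (bl i) * (\<Sum>S\<in>Pow {1..n}. coef n e S x *\<^sub>R blade e S)"
      by (rule arg_cong[OF expand[OF cl]])
    then show ?thesis by (simp add: sum_distrib_left)
  qed
  finally show ?thesis .
qed

lemma dims: "dim_row (pimap n bl e x) = 2^n" "dim_col (pimap n bl e x) = 2^n"
  by (simp_all add: pimap_def)


lemma Emat_dims: "dim_row (Emat n bl e S) = 2^n" "dim_col (Emat n bl e S) = 2^n"
  by (simp_all add: Emat_def Gmat_def coef_mat_def mult_table_def)

lemma pimap_blade:
  assumes S: "S \<in> Pow {1..n}"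
  shows "pimap n bl e (blade e S) = Emat n bl e S"
proof (rule eq_matI)
  fix i j assume i: "i < dim_row (Emat n bl e S)" and j: "j < dim_col (Emat n bl e S)"
  have "pimap n bl e (blade e S) $$ (i,j) = (\<Sum>T\<in>Pow {1..n}. coef n e T (blade e S) * Emat n bl e T $$ (i,j))"
    using i j by (simp add: pimap_def Emat_dims)
  also have "\<dots> = (\<Sum>T\<in>Pow {1..n}. if S = T then Emat n bl e T $$ (i,j) else 0)"
  proof (rule sum.cong[OF refl])
    fix T assume T: "T \<in> Pow {1..n}"
    show "coef n e T (blade e S) * Emat n bl e T $$ (i,j) = (if S = T then Emat n bl e T $$ (i,j) else 0)"
      unfolding coef_blade[OF cl T S] by auto
  qed
  also have "\<dots> = Emat n bl e S $$ (i,j)" using S by (simp only: sum.delta' finite_Pow_iff finite_atLeastAtMost if_True)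
  finally show "pimap n bl e (blade e S) $$ (i,j) = Emat n bl e S $$ (i,j)" .
qed (simp_all add: dims Emat_dims)

lemma g_part: "coef_mat n e S (g_alg n bl e (mult_table n bl e)) = Gmat n bl e * coef_mat n e S (mult_table n bl e)"
proof (rule eq_matI)
  fix i j assume i: "i < dim_row (Gmat n bl e * coef_mat n e S (mult_table n bl e))"
    and j: "j < dim_col (Gmat n bl e * coef_mat n e S (mult_table n bl e))"
  then have i': "i < 2^n" and j': "j < 2^n" by (simp_all add: Gmat_def coef_mat_def mult_table_def)
  show "coef_mat n e S (g_alg n bl e (mult_table n bl e)) $$ (i,j) = (Gmat n bl e * coef_mat n e S (mult_table n bl e)) $$ (i,j)"
    using i' j' by (simp add: g_alg_def coef_mat_def mult_table_def index_mult_mat scalar_prod_def coef_sum[OF cl] coef_scale[OF cl] Gmat_def atLeast0LessThan)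
qed (simp_all add: Gmat_def coef_mat_def mult_table_def g_alg_def)

end


theorem theorem2:
  fixes e :: "nat \<Rightarrow> 'a::real_algebra_1" and \<sigma> :: "nat \<Rightarrow> real"
    and p q n :: nat and bl :: "nat \<Rightarrow> nat set"
  assumes "clifford_pq p q n \<sigma> e"
    and "blade_order n bl"
  shows "(\<forall>S\<in>Pow {1..n}.
            pimap n bl e (blade e S) = coef_mat n e S (g_alg n bl e (mult_table n bl e)) \<and>
            pimap n bl e (blade e S) = Gmat n bl e * coef_mat n e S (mult_table n bl e))
       \<and> (\<forall>x y. pimap n bl e (x + y) = pimap n bl e x + pimap n bl e y)
       \<and> (\<forall>c x. pimap n bl e (c *\<^sub>R x) = smult_mat c (pimap n bl e x))
       \<and> (\<forall>x y. pimap n bl e (x * y) = pimap n bl e x * pimap n bl e y)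
       \<and> pimap n bl e 1 = one_mat (2^n)
       \<and> inj (pimap n bl e)
       \<and> (\<forall>x. the_inv (pimap n bl e) (pimap n bl e x) = x)"
proof -
  note cl = assms(1) and bo = assms(2)
  have A: "\<forall>S\<in>Pow {1..n}.
            pimap n bl e (blade e S) = coef_mat n e S (g_alg n bl e (mult_table n bl e)) \<and>
            pimap n bl e (blade e S) = Gmat n bl e * coef_mat n e S (mult_table n bl e)"
    using pimap_blade[OF cl bo] g_part[OF cl bo] by (simp add: Emat_def)
  have add: "\<forall>x y. pimap n bl e (x + y) = pimap n bl e x + pimap n bl e y"
    by (intro allI, rule eq_matI) (simp_all add: pimap_def coef_add[OF cl] distrib_right sum.distrib)
  have sc: "\<forall>c x. pimap n bl e (c *\<^sub>R x) = smult_mat c (pimap n bl e x)"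
    by (intro allI, rule eq_matI) (simp_all add: pimap_def coef_scale[OF cl] sum_distrib_left mult.assoc)
  have mul: "\<forall>x y. pimap n bl e (x * y) = pimap n bl e x * pimap n bl e y"
  proof (intro allI, rule eq_matI)
    fix x y i j assume i: "i < dim_row (pimap n bl e x * pimap n bl e y)" and j: "j < dim_col (pimap n bl e x * pimap n bl e y)"
    then have i': "i < 2^n" and j': "j < 2^n" by (simp_all add: dims[OF cl bo])
    have "(pimap n bl e x * pimap n bl e y) $$ (i,j) = (\<Sum>k<2^n. coef n e (bl k) (blade e (bl i) * x) * coef n e (bl j) (blade e (bl k) * y))"
      using i' j' by (simp add: index_mult_mat dims[OF cl bo] scalar_prod_def pimap_idx[OF cl bo] atLeast0LessThan)
    also have "\<dots> = coef n e (bl j) ((\<Sum>k<2^n. coef n e (bl k) (blade e (bl i) * x) *\<^sub>R blade e (bl k)) * y)"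
      by (simp add: coef_sum[OF cl] coef_scale[OF cl] sum_distrib_right)
    also have "\<dots> = coef n e (bl j) ((blade e (bl i) * x) * y)"
      using expand_idx[OF cl bo, of "blade e (bl i) * x"] by simp
    also have "\<dots> = pimap n bl e (x * y) $$ (i,j)"
      using i' j' by (simp add: pimap_idx[OF cl bo] mult.assoc)
    finally show "pimap n bl e (x * y) $$ (i,j) = (pimap n bl e x * pimap n bl e y) $$ (i,j)" ..
  qed (simp_all add: dims[OF cl bo])
  have one: "pimap n bl e 1 = one_mat (2^n)"
  proof (rule eq_matI)
    fix i j assume "i < dim_row (one_mat (2^n) :: real mat)" "j < dim_col (one_mat (2^n) :: real mat)"
    then have i': "i < 2^n" and j': "j < 2^n" by simp_all
    have "pimap n bl e 1 $$ (i,j) = coef n e (bl j) (blade e (bl i))"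
      using pimap_idx[OF cl bo i' j'] by simp
    also have "\<dots> = (if i = j then 1 else 0)"
      using coef_blade[OF cl bl_in[OF cl bo j'] bl_in[OF cl bo i']] bl_eq[OF cl bo j' i'] by auto
    finally show "pimap n bl e 1 $$ (i,j) = one_mat (2^n) $$ (i,j)" using i' j' by simp
  qed (simp_all add: dims[OF cl bo])
  have inj: "inj (pimap n bl e)"
  proof (rule injI)
    fix x y assume eq: "pimap n bl e x = pimap n bl e y"
    have p0: "(0::nat) < 2^n" by simp
    have "\<And>j. j < 2^n \<Longrightarrow> coef n e (bl j) x = coef n e (bl j) y"
    proof -
      fix j :: nat assume j: "j < 2^n"
      have "coef n e (bl j) x = pimap n bl e x $$ (0,j)"
        using pimap_idx[OF cl bo p0 j] by (simp add: bl0[OF cl bo] blade_def)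
      also have "\<dots> = pimap n bl e y $$ (0,j)" using eq by simp
      also have "\<dots> = coef n e (bl j) y"
        using pimap_idx[OF cl bo p0 j] by (simp add: bl0[OF cl bo] blade_def)
      finally show "coef n e (bl j) x = coef n e (bl j) y" .
    qed
    then have "(\<Sum>k<2^n. coef n e (bl k) x *\<^sub>R blade e (bl k)) = (\<Sum>k<2^n. coef n e (bl k) y *\<^sub>R blade e (bl k))"
      by (intro sum.cong) auto
    then show "x = y" using expand_idx[OF cl bo, of x] expand_idx[OF cl bo, of y] by simp
  qed
  have inv: "\<forall>x. the_inv (pimap n bl e) (pimap n bl e x) = x"
    using the_inv_f_f[OF inj] by blast
  show ?thesis using A add sc mul one inj inv by blast
qed

end
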